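(* Let $M,K\ge2$, $Q\ge1$. Consider the family $\mathcal{I}$ of inequalities, indexed by $z\in[Q]$ and tuples $(\mathcal{V}^{(1)},\dots,\mathcal{V}^{(K)})$ of non-empty subsets of $[M]$ with $\mathcal{V}^{(k)}\ne[M]$ for at least one $k$, $$P'\big(Y(x_1)\in\mathcal{V}^{(1)},\dots,Y(x_K)\in\mathcal{V}^{(K)}\big)\le \sum_{k=1}^K P\big(X=k,\,Y\in\mathcal{V}^{(k)}\mid Z=z\big),$$ in the unknowns $P'$ (a distribution on $[M]^K$) and $P(\cdot,\cdot\mid Z=z)$ (distributions on $[K]\times[M]$, $z\in[Q]$). Let $\mathcal{S}\subseteq\mathcal{I}$ consist of those inequalities whose tuple satisfies either (1) there exist $k\ne k^*$ with $\mathcal{V}^{(k)}\ne[M]$ and $\mathcal{V}^{(k^* )}\ne[M]$; or (2) there exist $k^*\in[K]$ and $m\in[M]$ such that $\mathcal{V}^{(k^* )}=[M]\setminus\{m\}$ and $\mathcal{V}^{(k)}=[M]$ for all $k\ne k^*$. Then $\mathcal{S}$ is equivalent to $\mathcal{I}$ (they define the same set of $(P',P(\cdot,\cdot\mid Z))$), $\mathcal{S}$ is non-redundant, and $\mathcal{S}$ has $QK(2^M-M-2)$ fewer inequalities than $\mathcal{I}$.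
   Context: Notation $[n]=\{1,\dots,n\}$. For each fixed $z\in[Q]$, the inequalities with index $z$, together with the constraints that $P'$ and $P(\cdot,\cdot\mid Z=z)$ are probability distributions, define a polytope of pairs $(P',P(\cdot,\cdot\mid Z=z))$. Relative to a set of inequalities, an individual inequality is redundant if it is implied by the remaining inequalities of the set (and the probability-simplex constraints); a set is non-redundant if none of its inequalities is redundant. (The family $\mathcal{I}$ characterizes exactly the pairs of joint counterfactual distribution of $(Y(x_1),\dots,Y(x_K))$ and observed distributions $P(X,Y\mid Z)$ compatible with standard instrumental variable models with $Y\in[M]$, $X\in[K]$, $Z\in[Q]$.) *)

theory Defs
  imports Complex_Main "HOL-Library.FuncSet"
begin

text \<open>Conventions: [n] = {1..n}. Response tuples (Y(x_1),...,Y(x_K)) are extensional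
functions {1..K} -> {1..M}. P' assigns a probability to each tuple; Pz k m stands for
P(X=k, Y=m | Z=z); a family of conditionals is P :: nat => nat => nat => real, P z k m.
An inequality is indexed by (z, V) with V an extensional map k |-> V^(k).\<close>

definition tuples :: "nat \<Rightarrow> nat \<Rightarrow> (nat \<Rightarrow> nat) set" where
  "tuples M K = PiE {1..K} (\<lambda>_. {1..M})"

definition is_joint_distr :: "nat \<Rightarrow> nat \<Rightarrow> ((nat \<Rightarrow> nat) \<Rightarrow> real) \<Rightarrow> bool" where
  "is_joint_distr M K P' \<longleftrightarrow>
     (\<forall>y\<in>tuples M K. 0 \<le> P' y) \<and> (\<Sum>y\<in>tuples M K. P' y) = 1"

definition is_obs_distr :: "nat \<Rightarrow> nat \<Rightarrow> (nat \<Rightarrow> nat \<Rightarrow> real) \<Rightarrow> bool" where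
  "is_obs_distr M K Pz \<longleftrightarrow>
     (\<forall>k\<in>{1..K}. \<forall>m\<in>{1..M}. 0 \<le> Pz k m) \<and> (\<Sum>k=1..K. \<Sum>m=1..M. Pz k m) = 1"

definition ineq_holds ::
  "nat \<Rightarrow> nat \<Rightarrow> ((nat \<Rightarrow> nat) \<Rightarrow> real) \<Rightarrow> (nat \<Rightarrow> nat \<Rightarrow> real) \<Rightarrow> (nat \<Rightarrow> nat set) \<Rightarrow> bool" where
  "ineq_holds M K P' Pz V \<longleftrightarrow>
     (\<Sum>y\<in>{y\<in>tuples M K. \<forall>k\<in>{1..K}. y k \<in> V k}. P' y)
       \<le> (\<Sum>k=1..K. \<Sum>m\<in>V k. Pz k m)"

definition I_idx :: "nat \<Rightarrow> nat \<Rightarrow> nat \<Rightarrow> (nat \<times> (nat \<Rightarrow> nat set)) set" where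
  "I_idx M K Q = {(z, V). z \<in> {1..Q} \<and>
      V \<in> PiE {1..K} (\<lambda>_. {A. A \<subseteq> {1..M} \<and> A \<noteq> {}}) \<and>
      (\<exists>k\<in>{1..K}. V k \<noteq> {1..M})}"

definition S_idx :: "nat \<Rightarrow> nat \<Rightarrow> nat \<Rightarrow> (nat \<times> (nat \<Rightarrow> nat set)) set" where
  "S_idx M K Q = {(z, V) \<in> I_idx M K Q.
      (\<exists>k\<in>{1..K}. \<exists>k'\<in>{1..K}. k \<noteq> k' \<and> V k \<noteq> {1..M} \<and> V k' \<noteq> {1..M}) \<or>
      (\<exists>ks\<in>{1..K}. \<exists>m\<in>{1..M}. V ks = {1..M} - {m} \<and>
          (\<forall>k\<in>{1..K}. k \<noteq> ks \<longrightarrow> V k = {1..M}))}"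

definition feasible ::
  "nat \<Rightarrow> nat \<Rightarrow> nat \<Rightarrow> (nat \<times> (nat \<Rightarrow> nat set)) set
     \<Rightarrow> (((nat \<Rightarrow> nat) \<Rightarrow> real) \<times> (nat \<Rightarrow> nat \<Rightarrow> nat \<Rightarrow> real)) set" where
  "feasible M K Q J = {(P', P). is_joint_distr M K P' \<and>
      (\<forall>z\<in>{1..Q}. is_obs_distr M K (P z)) \<and>
      (\<forall>(z, V)\<in>J. ineq_holds M K P' (P z) V)}"

definition non_redundant :: "nat \<Rightarrow> nat \<Rightarrow> (nat \<times> (nat \<Rightarrow> nat set)) set \<Rightarrow> bool" where
  "non_redundant M K J \<longleftrightarrow>
     (\<forall>(z, V)\<in>J. \<exists>P' Pz. is_joint_distr M K P' \<and> is_obs_distr M K Pz \<and>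
        (\<forall>(z', V')\<in>J. z' = z \<and> V' \<noteq> V \<longrightarrow> ineq_holds M K P' Pz V') \<and>
        \<not> ineq_holds M K P' Pz V)"

end

theory Submission
  imports Defs
begin


lemma prod_bound:
  fixes x :: "nat \<Rightarrow> real" and K M :: nat
  assumes K2: "K \<ge> 2" and M1: "M \<ge> 1"
    and x01: "\<forall>k\<in>{1..K}. 0 \<le> x k \<and> x k \<le> 1"
    and j: "j \<in> {1..K}" and xj: "x j \<le> 1 - 1 / M"
  shows "(K + 1 / M) * (\<Prod>k\<in>{1..K}. x k) \<le> (\<Sum>k\<in>{1..K}. x k)"
proof -
  define Oth where "Oth = {1..K} - {j}"
  define u where "u = (\<Prod>k\<in>Oth. x k)"
  have fin: "finite Oth" unfolding Oth_def by auto
  have cardO: "card Oth = K - 1" unfolding Oth_def using j by auto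
  have p: "(\<Prod>k\<in>{1..K}. x k) = x j * u"
    unfolding u_def Oth_def using j by (simp add: prod.remove)
  have s: "(\<Sum>k\<in>{1..K}. x k) = x j + (\<Sum>k\<in>Oth. x k)"
    unfolding Oth_def using j by (simp add: sum.remove)
  have u0: "0 \<le> u" unfolding u_def Oth_def using x01 by (intro prod_nonneg) auto
  have ule: "u \<le> x i" if i: "i \<in> Oth" for i
  proof -
    have "u = x i * (\<Prod>k\<in>Oth - {i}. x k)" unfolding u_def using fin i by (simp add: prod.remove)
    moreover have "(\<Prod>k\<in>Oth - {i}. x k) \<le> 1"
      using x01 unfolding Oth_def by (intro prod_le_1) auto
    moreover have "0 \<le> x i" using x01 i unfolding Oth_def by auto
    ultimately show ?thesis by (metis mult_left_le)
  qed
  have "(\<Sum>k\<in>Oth. u) \<le> (\<Sum>k\<in>Oth. x k)" using ule by (intro sum_mono) auto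
  hence sO: "real (K - 1) * u \<le> (\<Sum>k\<in>Oth. x k)" using cardO by simp
  have xj0: "0 \<le> x j" and xj1: "x j \<le> 1" using x01 j by auto
  have u1: "u \<le> 1" unfolding u_def Oth_def using x01 by (intro prod_le_1) auto
  have Mpos: "(0::real) < M" using M1 by simp
  have K1: "real (K - 1) \<ge> 1" using K2 by simp
  have "(K + 1 / M) * (x j * u) \<le> x j + real (K - 1) * u"
  proof -
    have a0: "x j * u \<le> 1 * u" using mult_right_mono[OF xj1 u0] .
    have a: "x j * u / M \<le> u / M" using divide_right_mono[OF a0, of "real M"] by simp
    have b: "u / M \<le> u * (1 - x j)"
    proof -
      have "1 / M \<le> 1 - x j" using xj by simp
      hence "u * (1 / M) \<le> u * (1 - x j)" using u0 by (rule mult_left_mono)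
      thus ?thesis by simp
    qed
    have c: "u * (1 - x j) \<le> real (K - 1) * u * (1 - x j)"
      proof -
      have uu: "0 \<le> u * (1 - x j)" using u0 xj1 by simp
      have "1 * (u * (1 - x j)) \<le> real (K - 1) * (u * (1 - x j))" using mult_right_mono[OF K1 uu] .
      thus ?thesis by (simp add: mult.assoc)
    qed
    have d: "x j * u \<le> x j" using xj0 u1 by (simp add: mult_left_le)
    have e1: "(K + 1 / M) * (x j * u) = real (K - 1) * (x j * u) + x j * u + x j * u / M"
      using K2 by (simp add: algebra_simps of_nat_diff)
    have e2: "real (K - 1) * u * (1 - x j) = real (K - 1) * u - real (K - 1) * (x j * u)"
      by (simp add: algebra_simps)
    show ?thesis using a b c d e1 e2 by linarith
  qed
  thus ?thesis unfolding p s using sO by linarith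
qed


lemma sum_card_fibres:
  assumes "finite T" "finite B"
  shows "(\<Sum>m\<in>B. real (card {y\<in>T. f y = m})) = real (card {y\<in>T. f y \<in> B})"
proof -
  have eq: "{y\<in>T. f y \<in> B} = (\<Union>m\<in>B. {y\<in>T. f y = m})" by auto
  have "card (\<Union>m\<in>B. {y\<in>T. f y = m}) = (\<Sum>m\<in>B. card {y\<in>T. f y = m})"
    using assms by (intro card_UN_disjoint) auto
  hence "card {y\<in>T. f y \<in> B} = (\<Sum>m\<in>B. card {y\<in>T. f y = m})"
    unfolding eq .
  thus ?thesis by simp
qed

lemma Aset_eq:
  assumes "\<forall>k\<in>{1..K}. V k \<subseteq> {1..M}"
  shows "{y\<in>tuples M K. \<forall>k\<in>{1..K}. y k \<in> V k} = PiE {1..K} V"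
proof (intro equalityI subsetI)
  fix y assume "y \<in> {y\<in>tuples M K. \<forall>k\<in>{1..K}. y k \<in> V k}"
  thus "y \<in> PiE {1..K} V" unfolding tuples_def by (simp add: PiE_iff)
next
  fix y assume y: "y \<in> PiE {1..K} V"
  have "PiE {1..K} V \<subseteq> PiE {1..K} (\<lambda>_. {1..M})" using assms by (intro PiE_mono) auto
  hence "y \<in> PiE {1..K} (\<lambda>_. {1..M})" using y by blast
  moreover have "\<forall>k\<in>{1..K}. y k \<in> V k" using y by (simp add: PiE_iff)
  ultimately show "y \<in> {y\<in>tuples M K. \<forall>k\<in>{1..K}. y k \<in> V k}" unfolding tuples_def
    by simp
qed

lemma sum_const_if:
  assumes "finite A"
  shows "(\<Sum>x\<in>A. if x \<in> B then (z::real) else 0) = z * real (card (A \<inter> B))"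
  using sum.inter_restrict[OF assms, of "\<lambda>_. z" B] by (simp add: mult.commute)



lemma aux_cancel: "(M::real) \<noteq> 0 \<Longrightarrow> X \<noteq> 0 \<Longrightarrow> c * M / X * (X / M) = c"
  by (simp add: field_simps)

lemma witness:
  fixes M K :: nat and V :: "nat \<Rightarrow> nat set"
  assumes M2: "M \<ge> 2" and K2: "K \<ge> 2"
    and hV: "V \<in> PiE {1..K} (\<lambda>_. {A. A \<subseteq> {1..M} \<and> A \<noteq> {}})"
    and hR: "\<exists>k\<in>{1..K}. V k \<noteq> {1..M}"
    and hS: "(\<exists>k\<in>{1..K}. \<exists>k'\<in>{1..K}. k \<noteq> k' \<and> V k \<noteq> {1..M} \<and> V k' \<noteq> {1..M}) \<or>
      (\<exists>ks\<in>{1..K}. \<exists>m\<in>{1..M}. V ks = {1..M} - {m} \<and>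
          (\<forall>k\<in>{1..K}. k \<noteq> ks \<longrightarrow> V k = {1..M}))"
  shows "\<exists>P' Pz. is_joint_distr M K P' \<and> is_obs_distr M K Pz \<and>
     (\<forall>V'. V' \<in> PiE {1..K} (\<lambda>_. {A. A \<subseteq> {1..M} \<and> A \<noteq> {}}) \<and> (\<exists>k\<in>{1..K}. V' k \<noteq> {1..M})
        \<and> V' \<noteq> V \<longrightarrow> ineq_holds M K P' Pz V') \<and> \<not> ineq_holds M K P' Pz V"
proof -
  define R where "R = {k\<in>{1..K}. V k \<noteq> {1..M}}"
  define Tk where "Tk = (\<lambda>k. if k \<in> R then {1..M} - V k else {1..M})"
  define T where "T = PiE {1..K} Tk"
  define AV where "AV = PiE {1..K} V"
  define r where "r = card R"
  define N where "N = real r * real (card T)"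
  define c where "c = 1 / (N + 1)"
  define g where "g = c * real M / (real K * real M + 1)"
  define e where "e = c / (real K * real M + 1)"
  have Vsub: "V k \<subseteq> {1..M}" "V k \<noteq> {}" if "k \<in> {1..K}" for k
    using hV that by (auto simp: PiE_iff)
  have finV: "finite (V k)" if "k \<in> {1..K}" for k using Vsub(1)[OF that] finite_subset by blast
  have cardV: "card (V k) > 0" if "k \<in> {1..K}" for k using Vsub[OF that] finV[OF that] by auto
  have cardVM: "card (V k) \<le> M" if "k \<in> {1..K}" for k
    using card_mono[OF _ Vsub(1)[OF that]] by simp
  have Rsub: "R \<subseteq> {1..K}" unfolding R_def by auto
  have finR: "finite R" using Rsub finite_subset by blast
  obtain k0 where k0: "k0 \<in> R" using hR unfolding R_def by blast
  obtain m0 where m0: "m0 \<in> {1..M}" "m0 \<notin> V k0"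
    using k0 Vsub[of k0] unfolding R_def by blast
  have rpos: "r \<ge> 1" unfolding r_def using k0 finR by (metis One_nat_def Suc_leI card_gt_0_iff empty_iff)
  have Tk_sub: "Tk k \<subseteq> {1..M}" for k unfolding Tk_def by auto
  have Tk_ne: "Tk k \<noteq> {}" if "k \<in> {1..K}" for k
  proof (cases "k \<in> R")
    case True
    then have "V k \<noteq> {1..M}" unfolding R_def by auto
    with Vsub[OF that] have "{1..M} - V k \<noteq> {}" by auto
    with True show ?thesis unfolding Tk_def by simp
  next
    case False
    then show ?thesis unfolding Tk_def using M2 by auto
  qed
  have memT: "y k \<in> Tk k" if "y \<in> T" "k \<in> {1..K}" for y k
    using that unfolding T_def by (simp add: PiE_iff)
  have finT: "finite T" unfolding T_def by (intro finite_PiE) (auto simp: Tk_def)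
  have T_ne: "T \<noteq> {}" unfolding T_def using Tk_ne by (simp add: PiE_eq_empty_iff)
  have cardT: "card T > 0" using finT T_ne by auto
  have finAV: "finite AV" unfolding AV_def using finV by (intro finite_PiE) auto
  have cardAV: "card AV = (\<Prod>k\<in>{1..K}. card (V k))" unfolding AV_def by (simp add: card_PiE)
  have cardAVpos: "card AV > 0" using cardAV cardV by (simp add: prod_pos)
  have T_tup: "T \<subseteq> tuples M K" unfolding T_def tuples_def using Tk_sub by (intro PiE_mono) auto
  have AV_tup: "AV \<subseteq> tuples M K" unfolding AV_def tuples_def using Vsub by (intro PiE_mono) auto
  have AVT: "AV \<inter> T = {}"
  proof -
    { fix y assume "y \<in> AV" "y \<in> T"
      hence "y k0 \<in> V k0" "y k0 \<in> Tk k0" using k0 Rsub unfolding AV_def T_def by (auto simp: PiE_iff)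
      hence False using k0 unfolding Tk_def by auto }
    thus ?thesis by blast
  qed
  have N0: "N \<ge> 0" unfolding N_def by simp
  have cpos: "c > 0" unfolding c_def using N0 by simp
  have cN: "c * N + c = 1" unfolding c_def using N0 by (simp add: field_simps)
  have KMpos: "real K * real M + 1 > 0" by (simp add: add_nonneg_pos)
  have KMne: "real K * real M + 1 \<noteq> 0" using KMpos by simp
  have gK: "g * K + e = c"
  proof -
    have "g * K + e = c * (real K * real M + 1) / (real K * real M + 1)"
      unfolding g_def e_def by (simp add: add_divide_distrib algebra_simps)
    thus ?thesis using KMne by simp
  qed
  have gKM: "g * (K + 1 / M) = c"
  proof -
    have Mne: "real M \<noteq> 0" using M2 by simp
    have eq: "K + 1 / M = (real K * real M + 1) / M" using Mne by (simp add: field_simps)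
    have "g * (K + 1 / M) = c * M / (real K * real M + 1) * ((real K * real M + 1) / M)"
      by (simp only: g_def eq)
    also have "\<dots> = c" using Mne KMne by (rule aux_cancel)
    finally show ?thesis .
  qed
  have epos: "e > 0" unfolding e_def using cpos KMpos by simp
  have g0: "g \<ge> 0" unfolding g_def using cpos KMpos by simp
  define P' where "P' = (\<lambda>y. (if y \<in> AV then c / card AV else 0) + (if y \<in> T then c * r else 0))"
  define Pz where "Pz = (\<lambda>k m. (if m \<in> V k then g / card (V k) else 0)
     + (if k \<in> R then c * card {y\<in>T. y k = m} else 0) + (if k = k0 \<and> m = m0 then e else 0))"
  have fintup: "finite (tuples M K)" unfolding tuples_def by (intro finite_PiE) auto
  have LHS: "(\<Sum>y\<in>{y\<in>tuples M K. \<forall>k\<in>{1..K}. y k \<in> V' k}. P' y)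
      = c * (\<Prod>k\<in>{1..K}. real (card (V' k \<inter> V k)) / real (card (V k)))
        + c * r * card (PiE {1..K} V' \<inter> T)"
    if hV': "\<forall>k\<in>{1..K}. V' k \<subseteq> {1..M}" for V'
  proof -
    have eqA: "{y\<in>tuples M K. \<forall>k\<in>{1..K}. y k \<in> V' k} = PiE {1..K} V'" using Aset_eq[OF hV'] .
    have finV': "finite (V' k)" if "k \<in> {1..K}" for k using hV' that by (meson finite_atLeastAtMost finite_subset)
    have finA: "finite (PiE {1..K} V')" using finV' by (intro finite_PiE) auto
    have "(\<Sum>y\<in>PiE {1..K} V'. P' y) = (\<Sum>y\<in>PiE {1..K} V'. if y \<in> AV then c / card AV else 0)
        + (\<Sum>y\<in>PiE {1..K} V'. if y \<in> T then c * r else 0)"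
      unfolding P'_def by (simp add: sum.distrib)
    also have "\<dots> = c / card AV * card (PiE {1..K} V' \<inter> AV) + c * r * card (PiE {1..K} V' \<inter> T)"
      using sum_const_if[OF finA] by simp
    also have "PiE {1..K} V' \<inter> AV = PiE {1..K} (\<lambda>k. V' k \<inter> V k)" unfolding AV_def by (simp add: PiE_Int)
    also have "real (card (PiE {1..K} (\<lambda>k. V' k \<inter> V k))) = (\<Prod>k\<in>{1..K}. real (card (V' k \<inter> V k)))"
      by (simp add: card_PiE)
    also have "c / card AV * (\<Prod>k\<in>{1..K}. real (card (V' k \<inter> V k)))
        = c * (\<Prod>k\<in>{1..K}. real (card (V' k \<inter> V k)) / real (card (V k)))"
      unfolding cardAV by (simp add: prod_dividef)
    finally show ?thesis unfolding eqA .
  qed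
  have RHSk: "(\<Sum>m\<in>B. Pz k m) = g * (real (card (B \<inter> V k)) / real (card (V k)))
      + (if k \<in> R then c * card {y\<in>T. y k \<in> B} else 0) + (if k = k0 \<and> m0 \<in> B then e else 0)"
    if finB: "finite B" for B k
  proof -
    have 1: "(\<Sum>m\<in>B. if m \<in> V k then g / card (V k) else 0) = g * (real (card (B \<inter> V k)) / real (card (V k)))"
      using sum_const_if[OF finB] by simp
    have 2: "(\<Sum>m\<in>B. if k \<in> R then c * card {y\<in>T. y k = m} else 0) = (if k \<in> R then c * card {y\<in>T. y k \<in> B} else 0)"
      using sum_card_fibres[OF finT finB, of "\<lambda>y. y k"] by (simp add: sum_distrib_left[symmetric])
    have 3: "(\<Sum>m\<in>B. if k = k0 \<and> m = m0 then e else 0) = (if k = k0 \<and> m0 \<in> B then e else 0)"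
      using finB by (cases "k = k0") simp_all
    show ?thesis unfolding Pz_def sum.distrib 1 2 3 ..
  qed
  have joint: "is_joint_distr M K P'"
    unfolding is_joint_distr_def
  proof
    show "\<forall>y\<in>tuples M K. 0 \<le> P' y" unfolding P'_def using cpos by auto
    have "(\<Sum>y\<in>tuples M K. P' y) = (\<Sum>y\<in>tuples M K. if y \<in> AV then c / card AV else 0)
        + (\<Sum>y\<in>tuples M K. if y \<in> T then c * r else 0)"
      unfolding P'_def by (simp add: sum.distrib)
    also have "\<dots> = c / card AV * card (tuples M K \<inter> AV) + c * r * card (tuples M K \<inter> T)"
      using sum_const_if[OF fintup] by simp
    also have "tuples M K \<inter> AV = AV" using AV_tup by blast
    also have "tuples M K \<inter> T = T" using T_tup by blast
    also have "c / card AV * card AV + c * r * card T = c + c * N"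
      using cardAVpos unfolding N_def by simp
    finally show "(\<Sum>y\<in>tuples M K. P' y) = 1" using cN by simp
  qed
  have obs: "is_obs_distr M K Pz"
    unfolding is_obs_distr_def
  proof
    show "\<forall>k\<in>{1..K}. \<forall>m\<in>{1..M}. 0 \<le> Pz k m" unfolding Pz_def using cpos g0 epos by auto
    have row: "(\<Sum>m=1..M. Pz k m) = g + (if k \<in> R then c * card T else 0) + (if k = k0 then e else 0)"
      if k: "k \<in> {1..K}" for k
    proof -
      have "{1..M} \<inter> V k = V k" using Vsub[OF k] by blast
      moreover have "{y\<in>T. y k \<in> {1..M}} = T" using memT[OF _ k] Tk_sub by blast
      ultimately show ?thesis using RHSk[of "{1..M}" k] cardV[OF k] m0(1) by simp
    qed
    have "(\<Sum>k=1..K. \<Sum>m=1..M. Pz k m) = (\<Sum>k=1..K. g + (if k \<in> R then c * card T else 0) + (if k = k0 then e else 0))"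
      using row by (intro sum.cong) auto
    also have "\<dots> = K * g + (\<Sum>k=1..K. if k \<in> R then c * card T else 0) + e"
      using k0 Rsub by (auto simp: sum.distrib)
    also have "(\<Sum>k=1..K. if k \<in> R then c * card T else 0) = c * card T * card ({1..K} \<inter> R)"
      by (rule sum_const_if) simp
    also have "{1..K} \<inter> R = R" using Rsub by blast
    finally show "(\<Sum>k=1..K. \<Sum>m=1..M. Pz k m) = 1"
      using gK cN unfolding N_def r_def by (simp add: algebra_simps)
  qed
  have prod1: "(\<Prod>k\<in>{1..K}. real (card (V' k \<inter> V k)) / real (card (V k))) = 1"
    if "\<forall>k\<in>{1..K}. V k \<subseteq> V' k" for V'
  proof -
    have "(\<Prod>k\<in>{1..K}. real (card (V' k \<inter> V k)) / real (card (V k))) = (\<Prod>k\<in>{1..K}. 1)"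
    proof (rule prod.cong)
      fix k assume k: "k \<in> {1..K}"
      hence "V' k \<inter> V k = V k" using that by blast
      thus "real (card (V' k \<inter> V k)) / real (card (V k)) = 1" using cardV[OF k] by simp
    qed simp
    thus ?thesis by simp
  qed
  have notV: "\<not> ineq_holds M K P' Pz V"
  proof -
    have L: "(\<Sum>y\<in>{y\<in>tuples M K. \<forall>k\<in>{1..K}. y k \<in> V k}. P' y) = c"
      using LHS[of V] Vsub(1) prod1[of V] AVT unfolding AV_def by simp
    have "(\<Sum>k=1..K. \<Sum>m\<in>V k. Pz k m) = (\<Sum>k=1..K. g)"
    proof (rule sum.cong)
      fix k assume k: "k \<in> {1..K}"
      have e1: "{y\<in>T. y k \<in> V k} = {}" if "k \<in> R"
        using memT[OF _ k] that unfolding Tk_def by auto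
      have c0: "(if k \<in> R then c * real (card {y\<in>T. y k \<in> V k}) else 0) = 0"
      proof (cases "k \<in> R")
        case True show ?thesis unfolding e1[OF True] by simp
      qed simp
      have e0: "(if k = k0 \<and> m0 \<in> V k then e else 0) = 0" using m0(2) by auto
      have g1: "g * (real (card (V k \<inter> V k)) / real (card (V k))) = g" using cardV[OF k] by simp
      show "(\<Sum>m\<in>V k. Pz k m) = g"
        using RHSk[OF finV[OF k], of k] unfolding c0 e0 g1 by simp
    qed simp
    also have "\<dots> = K * g" by simp
    finally have "(\<Sum>k=1..K. \<Sum>m\<in>V k. Pz k m) < c" using gK epos by (simp add: mult.commute)
    thus ?thesis unfolding ineq_holds_def L by simp
  qed
  have others: "ineq_holds M K P' Pz V'"
    if hV'E: "V' \<in> PiE {1..K} (\<lambda>_. {A. A \<subseteq> {1..M} \<and> A \<noteq> {}})"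
      and hR': "\<exists>k\<in>{1..K}. V' k \<noteq> {1..M}" and ne: "V' \<noteq> V" for V'
  proof -
    have V'sub: "\<forall>k\<in>{1..K}. V' k \<subseteq> {1..M}" using hV'E by (auto simp: PiE_iff)
    have finV': "finite (V' k)" if "k \<in> {1..K}" for k using V'sub that by (meson finite_atLeastAtMost finite_subset)
    define x where "x = (\<lambda>k. real (card (V' k \<inter> V k)) / real (card (V k)))"
    define CT where "CT = card (PiE {1..K} V' \<inter> T)"
    define Ck where "Ck = (\<lambda>k. card {y\<in>T. y k \<in> V' k})"
    have L: "(\<Sum>y\<in>{y\<in>tuples M K. \<forall>k\<in>{1..K}. y k \<in> V' k}. P' y) = c * prod x {1..K} + c * r * CT"
      using LHS[OF V'sub] unfolding x_def CT_def by simp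
    have Rge: "g * sum x {1..K} + c * (\<Sum>k\<in>R. real (Ck k)) \<le> (\<Sum>k=1..K. \<Sum>m\<in>V' k. Pz k m)"
    proof -
      have "(\<Sum>k=1..K. \<Sum>m\<in>V' k. Pz k m) = (\<Sum>k=1..K. g * x k + (if k \<in> R then c * Ck k else 0) + (if k = k0 \<and> m0 \<in> V' k then e else 0))"
        using RHSk finV' unfolding x_def Ck_def by (intro sum.cong) auto
      also have "\<dots> \<ge> (\<Sum>k=1..K. g * x k + (if k \<in> R then c * Ck k else 0))"
        using epos by (intro sum_mono) auto
      also have "(\<Sum>k=1..K. g * x k + (if k \<in> R then c * Ck k else 0)) = g * sum x {1..K} + c * (\<Sum>k\<in>R. real (Ck k))"
      proof -
        have "(\<Sum>k=1..K. (if k \<in> R then c * Ck k else 0)) = (\<Sum>k\<in>{1..K} \<inter> R. c * Ck k)"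
          by (simp add: sum.inter_restrict)
        also have "{1..K} \<inter> R = R" using Rsub by blast
        finally show ?thesis by (simp add: sum.distrib sum_distrib_left)
      qed
      finally show ?thesis .
    qed
    have finCT: "finite {y\<in>T. y k \<in> V' k}" for k using finT by simp
    have CTle: "CT \<le> Ck k" if "k \<in> R" for k
    proof -
      have "PiE {1..K} V' \<inter> T \<subseteq> {y\<in>T. y k \<in> V' k}" using that Rsub by (auto simp: PiE_iff)
      thus ?thesis unfolding CT_def Ck_def by (rule card_mono[OF finCT])
    qed
    have comp2: "real r * CT \<le> (\<Sum>k\<in>R. real (Ck k))"
    proof -
      have "(\<Sum>k\<in>R. real CT) \<le> (\<Sum>k\<in>R. real (Ck k))" using CTle by (intro sum_mono) auto
      thus ?thesis unfolding r_def by simp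
    qed
    have x01: "\<forall>k\<in>{1..K}. 0 \<le> x k \<and> x k \<le> 1"
    proof
      fix k assume k: "k \<in> {1..K}"
      have "card (V' k \<inter> V k) \<le> card (V k)" using finV[OF k] by (simp add: card_mono)
      thus "0 \<le> x k \<and> x k \<le> 1" unfolding x_def using cardV[OF k] by simp
    qed
    show ?thesis
    proof (cases "\<forall>k\<in>{1..K}. V k \<subseteq> V' k")
      case True
      have px: "prod x {1..K} = 1" using prod1[OF True] unfolding x_def .
      have sx: "sum x {1..K} = K"
      proof -
        have "sum x {1..K} = (\<Sum>k\<in>{1..K}. 1)"
        proof (rule sum.cong)
          fix k assume k: "k \<in> {1..K}"
          hence "V' k \<inter> V k = V k" using True by blast
          thus "x k = 1" unfolding x_def using cardV[OF k] by simp
        qed simp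
        thus ?thesis by simp
      qed
      have "\<exists>kw\<in>R. \<exists>y\<in>T. y kw \<in> V' kw \<and> y \<notin> PiE {1..K} V'"
      proof -
        obtain k0' where k0': "k0' \<in> {1..K}" "V' k0' \<noteq> V k0'"
        proof -
          { assume "\<forall>k\<in>{1..K}. V' k = V k"
            hence "V' = V" using PiE_ext[OF hV'E hV] by blast
            with ne have False by simp }
          thus ?thesis using that by blast
        qed
        obtain m0' where m0': "m0' \<in> V' k0'" "m0' \<notin> V k0'" using k0' True by blast
        have m0'M: "m0' \<in> {1..M}" using m0'(1) V'sub k0'(1) by blast
        have k0'R: "k0' \<in> R" unfolding R_def using k0'(1) m0'M m0'(2) by auto
        have m0'T: "m0' \<in> Tk k0'" unfolding Tk_def using k0'R m0'M m0'(2) by simp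
        define pick where "pick = (\<lambda>k. SOME t. t \<in> Tk k)"
        have pick: "pick k \<in> Tk k" if "k \<in> {1..K}" for k
          unfolding pick_def using Tk_ne[OF that] by (simp add: some_in_eq)
        show ?thesis
        proof (cases "\<exists>k1\<in>{1..K}. k1 \<noteq> k0' \<and> V' k1 \<noteq> {1..M}")
          case True
          then obtain k1 where k1: "k1 \<in> {1..K}" "k1 \<noteq> k0'" "V' k1 \<noteq> {1..M}" by blast
          then obtain m1 where m1: "m1 \<in> {1..M}" "m1 \<notin> V' k1" using V'sub by blast
          have "m1 \<notin> V k1" using m1 k1(1) \<open>\<forall>k\<in>{1..K}. V k \<subseteq> V' k\<close> by blast
          hence k1R: "k1 \<in> R" unfolding R_def using k1(1) m1(1) by auto
          have m1T: "m1 \<in> Tk k1" unfolding Tk_def using k1R m1(1) \<open>m1 \<notin> V k1\<close> by simp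
          define y where "y = (\<lambda>k\<in>{1..K}. if k = k0' then m0' else if k = k1 then m1 else pick k)"
          have yT: "y \<in> T" unfolding T_def y_def using m0'T m1T pick by (auto simp: PiE_iff)
          have "y k0' \<in> V' k0'" unfolding y_def using k0'(1) m0'(1) by simp
          moreover have "y \<notin> PiE {1..K} V'" unfolding y_def using k1 m1 by (auto simp: PiE_iff)
          ultimately show ?thesis using k0'R yT by blast
        next
          case False
          have full: "V' k = {1..M}" if "k \<in> {1..K}" "k \<noteq> k0'" for k
            using False that by metis
          obtain kx where kx: "kx \<in> {1..K}" "V' kx \<noteq> {1..M}" using hR' by metis
          have "kx = k0'" using full kx by metis
          hence "V' k0' \<noteq> {1..M}" using kx by simp
          then obtain m1 where m1: "m1 \<in> {1..M}" "m1 \<notin> V' k0'" using V'sub k0'(1) by blast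
          have "m1 \<notin> V k0'" using m1 k0'(1) \<open>\<forall>k\<in>{1..K}. V k \<subseteq> V' k\<close> by blast
          have m1T: "m1 \<in> Tk k0'" unfolding Tk_def using k0'R m1(1) \<open>m1 \<notin> V k0'\<close> by simp
          from hS show ?thesis
          proof
            assume "\<exists>k\<in>{1..K}. \<exists>k'\<in>{1..K}. k \<noteq> k' \<and> V k \<noteq> {1..M} \<and> V k' \<noteq> {1..M}"
            then obtain kk where kk: "kk \<in> {1..K}" "kk \<noteq> k0'" "V kk \<noteq> {1..M}" by metis
            have kkR: "kk \<in> R" unfolding R_def using kk by simp
            define y where "y = (\<lambda>k\<in>{1..K}. if k = k0' then m1 else pick k)"
            have yT: "y \<in> T" unfolding T_def y_def using m1T pick by (auto simp: PiE_iff)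
            have "y kk \<in> Tk kk" using memT[OF yT kk(1)] .
            hence "y kk \<in> V' kk" using full[OF kk(1,2)] Tk_sub by blast
            moreover have "y \<notin> PiE {1..K} V'" unfolding y_def using k0'(1) m1 by (auto simp: PiE_iff)
            ultimately show ?thesis using kkR yT by blast
          next
            assume "\<exists>ks\<in>{1..K}. \<exists>m\<in>{1..M}. V ks = {1..M} - {m} \<and> (\<forall>k\<in>{1..K}. k \<noteq> ks \<longrightarrow> V k = {1..M})"
            then obtain ks m where ks: "ks \<in> {1..K}" "m \<in> {1..M}" "V ks = {1..M} - {m}"
              "\<forall>k\<in>{1..K}. k \<noteq> ks \<longrightarrow> V k = {1..M}" by blast
            have "k0' = ks" using k0'R ks(4) unfolding R_def by blast
            hence "m0' = m" using m0'M m0'(2) ks(3) by blast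
            hence "{1..M} \<subseteq> V' k0'" using m0'(1) \<open>k0' = ks\<close> ks(3) True k0'(1) by blast
            hence "V' k0' = {1..M}" using V'sub k0'(1) by blast
            with \<open>V' k0' \<noteq> {1..M}\<close> show ?thesis by blast
          qed
        qed
      qed
      then obtain kw y where kw: "kw \<in> R" and y: "y \<in> T" "y kw \<in> V' kw" "y \<notin> PiE {1..K} V'"
        by blast
      have "PiE {1..K} V' \<inter> T \<subset> {y\<in>T. y kw \<in> V' kw}"
        using y kw Rsub by (auto simp: PiE_iff)
      hence "CT < Ck kw" unfolding CT_def Ck_def by (rule psubset_card_mono[OF finCT])
      hence "real r * CT + 1 \<le> (\<Sum>k\<in>R. real (Ck k))"
      proof -
        assume lt: "CT < Ck kw"
        have "(\<Sum>k\<in>R. real (Ck k)) = real (Ck kw) + (\<Sum>k\<in>R - {kw}. real (Ck k))"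
          using kw finR by (simp add: sum.remove)
        moreover have "(\<Sum>k\<in>R - {kw}. real CT) \<le> (\<Sum>k\<in>R - {kw}. real (Ck k))"
          using CTle by (intro sum_mono) auto
        moreover have "card (R - {kw}) = r - 1" using kw finR unfolding r_def by simp
        moreover have "real (r - 1) = real r - 1" using rpos by simp
        ultimately show ?thesis using lt by (simp add: algebra_simps)
      qed
      hence h1: "c * (real r * real CT + 1) \<le> c * (\<Sum>k\<in>R. real (Ck k))"
        using cpos by (intro mult_left_mono) auto
      have h2: "c * (real r * real CT + 1) = c * r * CT + c" by (simp add: algebra_simps)
      have h3: "0 \<le> g * real K" using g0 by simp
      have "c * prod x {1..K} + c * r * CT \<le> g * sum x {1..K} + c * (\<Sum>k\<in>R. real (Ck k))"
        unfolding px sx using h1 h2 h3 by linarith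
      thus ?thesis unfolding ineq_holds_def L using Rge by linarith
    next
      case False
      then obtain j where j: "j \<in> {1..K}" "\<not> V j \<subseteq> V' j" by blast
      have "V' j \<inter> V j \<subset> V j" using j by blast
      hence "card (V' j \<inter> V j) < card (V j)" using finV[OF j(1)] by (rule psubset_card_mono[rotated])
      hence lt: "real (card (V' j \<inter> V j)) \<le> real (card (V j)) - 1" by linarith
      have cVpos: "real (card (V j)) > 0" using cardV[OF j(1)] by simp
      have "x j \<le> (real (card (V j)) - 1) / real (card (V j))"
        unfolding x_def using lt cVpos by (simp add: divide_right_mono)
      also have "\<dots> = 1 - 1 / real (card (V j))" using cVpos by (simp add: field_simps)
      also have "\<dots> \<le> 1 - 1 / real M"
        using cVpos cardVM[OF j(1)] by (simp add: frac_le)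
      finally have xj: "x j \<le> 1 - 1 / real M" .
      have pb: "(K + 1 / M) * prod x {1..K} \<le> sum x {1..K}"
        using prod_bound[OF K2 _ x01 j(1) xj] M2 by simp
      have "c * prod x {1..K} = g * ((K + 1 / M) * prod x {1..K})" using gKM by (simp add: mult.assoc[symmetric])
      also have "\<dots> \<le> g * sum x {1..K}" using pb g0 by (rule mult_left_mono)
      finally have c1: "c * prod x {1..K} \<le> g * sum x {1..K}" .
      have "c * r * CT \<le> c * (\<Sum>k\<in>R. real (Ck k))" using comp2 cpos by (simp add: mult.assoc)
      thus ?thesis unfolding ineq_holds_def L using Rge c1 by linarith
    qed
  qed
  have all: "\<forall>V'. V' \<in> PiE {1..K} (\<lambda>_. {A. A \<subseteq> {1..M} \<and> A \<noteq> {}}) \<and> (\<exists>k\<in>{1..K}. V' k \<noteq> {1..M})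
        \<and> V' \<noteq> V \<longrightarrow> ineq_holds M K P' Pz V'"
  proof (intro allI impI)
    fix V' assume "V' \<in> PiE {1..K} (\<lambda>_. {A. A \<subseteq> {1..M} \<and> A \<noteq> {}}) \<and> (\<exists>k\<in>{1..K}. V' k \<noteq> {1..M}) \<and> V' \<noteq> V"
    thus "ineq_holds M K P' Pz V'" using others by blast
  qed
  show ?thesis using joint obs all notV by blast
qed



lemma sum_fibres:
  assumes "finite T" "finite C"
  shows "(\<Sum>y\<in>{y\<in>T. f y \<in> C}. h y) = (\<Sum>m\<in>C. \<Sum>y\<in>{y\<in>T. f y = m}. (h y :: real))"
proof -
  have eq: "{y\<in>T. f y \<in> C} = (\<Union>m\<in>C. {y\<in>T. f y = m})" by auto
  show ?thesis unfolding eq using assms by (subst sum.UNION_disjoint) auto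
qed

lemma row_ineq:
  fixes P' :: "(nat \<Rightarrow> nat) \<Rightarrow> real" and Pz :: "nat \<Rightarrow> nat \<Rightarrow> real"
  assumes J: "is_joint_distr M K P'" and O: "is_obs_distr M K Pz"
    and ks: "ks \<in> {1..K}" and B: "B \<subseteq> {1..M}"
  shows "ineq_holds M K P' Pz (\<lambda>k\<in>{1..K}. if k = ks then B else {1..M}) \<longleftrightarrow>
    (\<Sum>m\<in>{1..M}-B. Pz ks m) \<le> (\<Sum>m\<in>{1..M}-B. \<Sum>y\<in>{y\<in>tuples M K. y ks = m}. P' y)"
proof -
  define V where "V = (\<lambda>k\<in>{1..K}. if k = ks then B else {1..M})"
  define q where "q = (\<lambda>m. \<Sum>y\<in>{y\<in>tuples M K. y ks = m}. P' y)"
  have fintup: "finite (tuples M K)" unfolding tuples_def by (intro finite_PiE) auto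
  have tupM: "y ks \<in> {1..M}" if "y \<in> tuples M K" for y using that ks unfolding tuples_def by (auto simp: PiE_iff)
  have finB: "finite B" using B finite_subset by blast
  have set1: "{y\<in>tuples M K. \<forall>k\<in>{1..K}. y k \<in> V k} = {y\<in>tuples M K. y ks \<in> B}"
  proof -
    have "(\<forall>k\<in>{1..K}. y k \<in> V k) \<longleftrightarrow> y ks \<in> B" if "y \<in> tuples M K" for y
    proof -
      have "\<forall>k\<in>{1..K}. y k \<in> {1..M}" using that unfolding tuples_def by (auto simp: PiE_iff)
      thus ?thesis unfolding V_def using ks by auto
    qed
    thus ?thesis by blast
  qed
  have tot: "(\<Sum>m\<in>{1..M}. q m) = 1"
  proof -
    have "(\<Sum>m\<in>{1..M}. q m) = (\<Sum>y\<in>{y\<in>tuples M K. y ks \<in> {1..M}}. P' y)"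
      unfolding q_def using sum_fibres[OF fintup, of "{1..M}"] by simp
    also have "{y\<in>tuples M K. y ks \<in> {1..M}} = tuples M K" using tupM by blast
    finally show ?thesis using J unfolding is_joint_distr_def by simp
  qed
  have L: "(\<Sum>y\<in>{y\<in>tuples M K. \<forall>k\<in>{1..K}. y k \<in> V k}. P' y) = 1 - (\<Sum>m\<in>{1..M}-B. q m)"
  proof -
    have "(\<Sum>y\<in>{y\<in>tuples M K. \<forall>k\<in>{1..K}. y k \<in> V k}. P' y) = (\<Sum>m\<in>B. q m)"
      unfolding set1 q_def using sum_fibres[OF fintup finB] by simp
    moreover have "(\<Sum>m\<in>{1..M}. q m) = (\<Sum>m\<in>B. q m) + (\<Sum>m\<in>{1..M}-B. q m)"
      using B by (metis add.commute finite_atLeastAtMost sum.subset_diff)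
    ultimately show ?thesis using tot by simp
  qed
  have R: "(\<Sum>k=1..K. \<Sum>m\<in>V k. Pz k m) = 1 - (\<Sum>m\<in>{1..M}-B. Pz ks m)"
  proof -
    have "(\<Sum>k=1..K. \<Sum>m\<in>V k. Pz k m) = (\<Sum>k=1..K. (\<Sum>m=1..M. Pz k m) - (if k = ks then (\<Sum>m\<in>{1..M}-B. Pz ks m) else 0))"
    proof (rule sum.cong)
      fix k assume k: "k \<in> {1..K}"
      show "(\<Sum>m\<in>V k. Pz k m) = (\<Sum>m=1..M. Pz k m) - (if k = ks then (\<Sum>m\<in>{1..M}-B. Pz ks m) else 0)"
      proof (cases "k = ks")
        case True
        have "(\<Sum>m=1..M. Pz k m) = (\<Sum>m\<in>B. Pz k m) + (\<Sum>m\<in>{1..M}-B. Pz k m)"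
          using B by (metis add.commute finite_atLeastAtMost sum.subset_diff)
        thus ?thesis unfolding V_def using k True by simp
      next
        case False
        thus ?thesis unfolding V_def using k by simp
      qed
    qed simp
    also have "\<dots> = (\<Sum>k=1..K. \<Sum>m=1..M. Pz k m) - (\<Sum>k=1..K. if k = ks then (\<Sum>m\<in>{1..M}-B. Pz ks m) else 0)"
      by (simp add: sum_subtractf)
    also have "(\<Sum>k=1..K. if k = ks then (\<Sum>m\<in>{1..M}-B. Pz ks m) else 0) = (\<Sum>m\<in>{1..M}-B. Pz ks m)"
      using ks by simp
    finally show ?thesis using O unfolding is_obs_distr_def by simp
  qed
  show ?thesis unfolding V_def[symmetric] ineq_holds_def L R q_def by linarith
qed



lemma S_sub_I: "S_idx M K Q \<subseteq> I_idx M K Q"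
  unfolding S_idx_def by auto

lemma I_restrict:
  assumes "(z, V) \<in> I_idx M K Q" "(z, V) \<notin> S_idx M K Q"
  shows "\<exists>ks\<in>{1..K}. V ks \<noteq> {1..M} \<and> V = (\<lambda>k\<in>{1..K}. if k = ks then V ks else {1..M})
           \<and> (\<forall>k\<in>{1..K}. k \<noteq> ks \<longrightarrow> V k = {1..M})"
proof -
  have I: "z \<in> {1..Q}" "V \<in> PiE {1..K} (\<lambda>_. {A. A \<subseteq> {1..M} \<and> A \<noteq> {}})"
    "\<exists>k\<in>{1..K}. V k \<noteq> {1..M}" using assms(1) unfolding I_idx_def by simp_all
  then obtain ks where ks: "ks \<in> {1..K}" "V ks \<noteq> {1..M}" by blast
  have n1: "\<not> (\<exists>k\<in>{1..K}. \<exists>k'\<in>{1..K}. k \<noteq> k' \<and> V k \<noteq> {1..M} \<and> V k' \<noteq> {1..M})"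
    using assms unfolding S_idx_def by simp
  have full: "\<forall>k\<in>{1..K}. k \<noteq> ks \<longrightarrow> V k = {1..M}"
  proof (intro ballI impI)
    fix k assume "k \<in> {1..K}" "k \<noteq> ks"
    hence "\<not> (k \<noteq> ks \<and> V k \<noteq> {1..M} \<and> V ks \<noteq> {1..M})" using n1 ks(1) by blast
    thus "V k = {1..M}" using ks(2) \<open>k \<noteq> ks\<close> by simp
  qed
  have "V = (\<lambda>k\<in>{1..K}. if k = ks then V ks else {1..M})"
  proof
    fix k show "V k = (\<lambda>k\<in>{1..K}. if k = ks then V ks else {1..M}) k"
    proof (cases "k \<in> {1..K}")
      case True
      note kK = this
      show ?thesis
      proof (cases "k = ks")
        case False thus ?thesis using full kK by simp
      next
        case True thus ?thesis using kK by simp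
      qed
    next
      case False thus ?thesis by (simp only: restrict_def if_not_P[OF False] PiE_arb[OF I(2) False] if_False)
    qed
  qed
  note Veq = this
  show ?thesis
    apply (rule bexI[of _ ks])
     apply (intro conjI)
       apply (rule ks(2))
      apply (rule Veq)
     apply (rule full)
    apply (rule ks(1))
    done
qed

lemma feasible_eq:
  assumes M2: "M \<ge> 2"
  shows "feasible M K Q (S_idx M K Q) = feasible M K Q (I_idx M K Q)"
proof
  show "feasible M K Q (I_idx M K Q) \<subseteq> feasible M K Q (S_idx M K Q)"
    unfolding feasible_def using S_sub_I by blast
next
  show "feasible M K Q (S_idx M K Q) \<subseteq> feasible M K Q (I_idx M K Q)"
  proof
    fix X assume X: "X \<in> feasible M K Q (S_idx M K Q)"
    obtain P' P where XP: "X = (P', P)" by (cases X)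
    have J: "is_joint_distr M K P'" and O: "\<forall>z\<in>{1..Q}. is_obs_distr M K (P z)"
      and H: "\<forall>(z, V)\<in>S_idx M K Q. ineq_holds M K P' (P z) V"
      using X unfolding XP feasible_def by auto
    have "ineq_holds M K P' (P z) V" if zV: "(z, V) \<in> I_idx M K Q" for z V
    proof (cases "(z, V) \<in> S_idx M K Q")
      case True thus ?thesis using H by blast
    next
      case False
      have z: "z \<in> {1..Q}" and VE: "V \<in> PiE {1..K} (\<lambda>_. {A. A \<subseteq> {1..M} \<and> A \<noteq> {}})"
        using zV unfolding I_idx_def by auto
      obtain ks where ks: "ks \<in> {1..K}" "V ks \<noteq> {1..M}"
        and Veq: "V = (\<lambda>k\<in>{1..K}. if k = ks then V ks else {1..M})"
        using I_restrict[OF zV False] by blast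
      have B: "V ks \<subseteq> {1..M}" using VE ks(1) by (auto simp: PiE_iff)
      have Oz: "is_obs_distr M K (P z)" using O z by blast
      have "(\<Sum>m\<in>{1..M}-V ks. P z ks m) \<le> (\<Sum>m\<in>{1..M}-V ks. \<Sum>y\<in>{y\<in>tuples M K. y ks = m}. P' y)"
      proof (rule sum_mono)
        fix m assume m: "m \<in> {1..M} - V ks"
        define Vm where "Vm = (\<lambda>k\<in>{1..K}. if k = ks then {1..M} - {m} else {1..M})"
        have ne: "{1..M} - {m} \<noteq> {}"
        proof -
          have a: "(1::nat) \<in> {1..M}" "(2::nat) \<in> {1..M}" using M2 by auto
          show ?thesis
          proof (cases "m = 1")
            case True
            hence "(2::nat) \<in> {1..M} - {m}" using a(2) by simp
            thus ?thesis by blast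
          next
            case False thus ?thesis using a(1) by blast
          qed
        qed
        have "(z, Vm) \<in> S_idx M K Q"
          unfolding S_idx_def I_idx_def
        proof (simp only: mem_Collect_eq case_prod_conv, intro conjI)
          show "z \<in> {1..Q}" by (rule z)
          show "Vm \<in> PiE {1..K} (\<lambda>_. {A. A \<subseteq> {1..M} \<and> A \<noteq> {}})"
            unfolding Vm_def restrict_PiE_iff
          proof
            fix k assume "k \<in> {1..K}"
            have Mne: "{1..M} \<noteq> {}" using M2 by simp
            show "(if k = ks then {1..M} - {m} else {1..M}) \<in> {A. A \<subseteq> {1..M} \<and> A \<noteq> {}}"
              using ne Mne by simp
          qed
          have v1: "Vm ks = {1..M} - {m}" unfolding Vm_def using ks(1) by simp
          have v2: "{1..M} - {m} \<noteq> {1..M}" using m by blast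
          show "\<exists>k\<in>{1..K}. Vm k \<noteq> {1..M}" using v1 v2 ks(1) by (intro bexI[of _ ks]) simp_all
          show "(\<exists>k\<in>{1..K}. \<exists>k'\<in>{1..K}. k \<noteq> k' \<and> Vm k \<noteq> {1..M} \<and> Vm k' \<noteq> {1..M}) \<or>
            (\<exists>ks\<in>{1..K}. \<exists>m\<in>{1..M}. Vm ks = {1..M} - {m} \<and> (\<forall>k\<in>{1..K}. k \<noteq> ks \<longrightarrow> Vm k = {1..M}))"
          proof (rule disjI2)
            have 1: "Vm ks = {1..M} - {m}" unfolding Vm_def using ks(1) by simp
            have 2: "\<forall>k\<in>{1..K}. k \<noteq> ks \<longrightarrow> Vm k = {1..M}" unfolding Vm_def by simp
            have 3: "m \<in> {1..M}" using m by simp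
            show "\<exists>ks\<in>{1..K}. \<exists>m\<in>{1..M}. Vm ks = {1..M} - {m} \<and> (\<forall>k\<in>{1..K}. k \<noteq> ks \<longrightarrow> Vm k = {1..M})"
              using 1 2 3 ks(1) by blast
          qed
        qed
        hence iVm: "ineq_holds M K P' (P z) Vm" using H by blast
        have "(\<Sum>m'\<in>{1..M}-({1..M}-{m}). P z ks m') \<le> (\<Sum>m'\<in>{1..M}-({1..M}-{m}). \<Sum>y\<in>{y\<in>tuples M K. y ks = m'}. P' y)"
          using row_ineq[OF J Oz ks(1), of "{1..M} - {m}"] iVm unfolding Vm_def by blast
        moreover have "{1..M}-({1..M}-{m}) = {m}" using m by auto
        ultimately show "P z ks m \<le> (\<Sum>y\<in>{y\<in>tuples M K. y ks = m}. P' y)" by simp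
      qed
      hence "ineq_holds M K P' (P z) (\<lambda>k\<in>{1..K}. if k = ks then V ks else {1..M})"
        using row_ineq[OF J Oz ks(1) B] by simp
      thus ?thesis by (subst Veq)
    qed
    hence "\<forall>(z, V)\<in>I_idx M K Q. ineq_holds M K P' (P z) V" by blast
    thus "X \<in> feasible M K Q (I_idx M K Q)" unfolding XP feasible_def using J O by simp
  qed
qed



definition Afam :: "nat \<Rightarrow> nat set set" where
  "Afam M = {A. A \<subseteq> {1..M} \<and> A \<noteq> {} \<and> A \<noteq> {1..M} \<and> (\<forall>m\<in>{1..M}. A \<noteq> {1..M} - {m})}"

lemma minus_one_ne:
  assumes "M \<ge> 2" shows "{1..M} - {m} \<noteq> ({}::nat set)"
proof -
  have a: "(1::nat) \<in> {1..M}" "(2::nat) \<in> {1..M}" using assms by auto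
  show ?thesis
  proof (cases "m = 1")
    case True
    hence "(2::nat) \<in> {1..M} - {m}" using a(2) by simp
    thus ?thesis by blast
  next
    case False thus ?thesis using a(1) by blast
  qed
qed

lemma card_Afam:
  assumes M2: "M \<ge> 2"
  shows "card (Afam M) = 2 ^ M - M - 2"
proof -
  define img where "img = (\<lambda>m. {1..M} - {m}) ` {1..M}"
  define D where "D = insert {} (insert {1..M} img)"
  have eq: "Afam M = Pow {1..M} - D"
    unfolding Afam_def D_def img_def by blast
  have inj: "inj_on (\<lambda>m. {1..M} - {m}) {1..M}"
  proof (rule inj_onI)
    fix a b assume ab: "a \<in> {1..M}" "b \<in> {1..M}" "{1..M} - {a} = {1..M} - {b}"
    show "a = b"
    proof (rule ccontr)
      assume "a \<noteq> b"
      hence "a \<in> {1..M} - {b}" using ab(1) by blast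
      thus False using ab(3) by blast
    qed
  qed
  have cimg: "card img = M" unfolding img_def using card_image[OF inj] by simp
  have finimg: "finite img" unfolding img_def by simp
  have n1: "{1..M} \<notin> img"
  proof
    assume "{1..M} \<in> img"
    then obtain m where m: "m \<in> {1..M}" "{1..M} = {1..M} - {m}" unfolding img_def by blast
    thus False by blast
  qed
  have n2: "{} \<notin> insert {1..M} img"
  proof
    assume "{} \<in> insert {1..M} img"
    moreover have "{1..M} \<noteq> ({}::nat set)" using M2 by simp
    ultimately obtain m where "{} = {1..M} - {m}" unfolding img_def by blast
    thus False using minus_one_ne[OF M2, of m] by simp
  qed
  have cD: "card D = M + 2" unfolding D_def using n1 n2 finimg cimg by simp
  have DP: "D \<subseteq> Pow {1..M}" unfolding D_def img_def by blast
  have "card (Pow {1..M} - D) = card (Pow {1..M}) - card D"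
    using DP by (intro card_Diff_subset) (auto simp: D_def finimg)
  also have "card (Pow {1..M}) = 2 ^ M" by (simp add: card_Pow)
  finally show ?thesis unfolding eq cD by simp
qed


definition fmap :: "nat \<Rightarrow> nat \<Rightarrow> nat \<times> nat \<times> nat set \<Rightarrow> nat \<times> (nat \<Rightarrow> nat set)" where
  "fmap M K = (\<lambda>(z, ks, A). (z, \<lambda>k\<in>{1..K}. if k = ks then A else {1..M}))"

lemma IS_eq:
  assumes M2: "M \<ge> 2"
  shows "I_idx M K Q - S_idx M K Q = fmap M K ` ({1..Q} \<times> {1..K} \<times> Afam M)"
proof
  show "I_idx M K Q - S_idx M K Q \<subseteq> fmap M K ` ({1..Q} \<times> {1..K} \<times> Afam M)"
  proof
    fix X assume X: "X \<in> I_idx M K Q - S_idx M K Q"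
    obtain z V where XV: "X = (z, V)" by (cases X)
    have zVI: "(z, V) \<in> I_idx M K Q" and zVS: "(z, V) \<notin> S_idx M K Q" using X XV by auto
    have z: "z \<in> {1..Q}" and VE: "V \<in> PiE {1..K} (\<lambda>_. {A. A \<subseteq> {1..M} \<and> A \<noteq> {}})"
      using zVI unfolding I_idx_def by simp_all
    obtain ks where ks: "ks \<in> {1..K}" "V ks \<noteq> {1..M}"
      and Veq: "V = (\<lambda>k\<in>{1..K}. if k = ks then V ks else {1..M})"
      and full: "\<forall>k\<in>{1..K}. k \<noteq> ks \<longrightarrow> V k = {1..M}"
      using I_restrict[OF zVI zVS] by blast
    have Vks: "V ks \<subseteq> {1..M}" "V ks \<noteq> {}" using VE ks(1) by (simp_all add: PiE_iff)
    have "\<forall>m\<in>{1..M}. V ks \<noteq> {1..M} - {m}"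
    proof (intro ballI notI)
      fix m assume m: "m \<in> {1..M}" "V ks = {1..M} - {m}"
      have "(z, V) \<in> S_idx M K Q" unfolding S_idx_def
        using zVI ks(1) m full by blast
      thus False using zVS by simp
    qed
    hence A: "V ks \<in> Afam M" unfolding Afam_def using Vks ks(2) by simp
    have "X = fmap M K (z, ks, V ks)" unfolding XV fmap_def by (simp only: prod.case, subst Veq) (rule refl)
    moreover have "(z, ks, V ks) \<in> {1..Q} \<times> {1..K} \<times> Afam M" using z ks(1) A by simp
    ultimately show "X \<in> fmap M K ` ({1..Q} \<times> {1..K} \<times> Afam M)" by (rule image_eqI)
  qed
next
  show "fmap M K ` ({1..Q} \<times> {1..K} \<times> Afam M) \<subseteq> I_idx M K Q - S_idx M K Q"
  proof
    fix X assume "X \<in> fmap M K ` ({1..Q} \<times> {1..K} \<times> Afam M)"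
    then obtain z ks A where zksA: "z \<in> {1..Q}" "ks \<in> {1..K}" "A \<in> Afam M"
      and X: "X = fmap M K (z, ks, A)" by blast
    define V where "V = (\<lambda>k\<in>{1..K}. if k = ks then A else {1..M})"
    have XV: "X = (z, V)" unfolding X V_def fmap_def by simp
    have A: "A \<subseteq> {1..M}" "A \<noteq> {}" "A \<noteq> {1..M}" "\<forall>m\<in>{1..M}. A \<noteq> {1..M} - {m}"
      using zksA(3) unfolding Afam_def by simp_all
    have Vks: "V ks = A" unfolding V_def using zksA(2) by simp
    have Vo: "V k = {1..M}" if "k \<in> {1..K}" "k \<noteq> ks" for k unfolding V_def using that by simp
    have VE: "V \<in> PiE {1..K} (\<lambda>_. {A. A \<subseteq> {1..M} \<and> A \<noteq> {}})"
      unfolding V_def restrict_PiE_iff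
    proof
      fix k assume "k \<in> {1..K}"
      have Mne: "{1..M} \<noteq> {}" using M2 by simp
      show "(if k = ks then A else {1..M}) \<in> {A. A \<subseteq> {1..M} \<and> A \<noteq> {}}"
        using A Mne by simp
    qed
    have inI: "(z, V) \<in> I_idx M K Q" unfolding I_idx_def
      using zksA(1,2) VE Vks A(3) by blast
    have notS: "(z, V) \<notin> S_idx M K Q"
    proof
      assume "(z, V) \<in> S_idx M K Q"
      hence "(\<exists>k\<in>{1..K}. \<exists>k'\<in>{1..K}. k \<noteq> k' \<and> V k \<noteq> {1..M} \<and> V k' \<noteq> {1..M}) \<or>
        (\<exists>ks\<in>{1..K}. \<exists>m\<in>{1..M}. V ks = {1..M} - {m} \<and> (\<forall>k\<in>{1..K}. k \<noteq> ks \<longrightarrow> V k = {1..M}))"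
        unfolding S_idx_def by simp
      thus False
      proof
        assume "\<exists>k\<in>{1..K}. \<exists>k'\<in>{1..K}. k \<noteq> k' \<and> V k \<noteq> {1..M} \<and> V k' \<noteq> {1..M}"
        then obtain k k' where kk: "k \<in> {1..K}" "k' \<in> {1..K}" "k \<noteq> k'" "V k \<noteq> {1..M}" "V k' \<noteq> {1..M}"
          by blast
        have "k = ks" using Vo kk(1,4) by blast
        moreover have "k' = ks" using Vo kk(2,5) by blast
        ultimately show False using kk(3) by simp
      next
        assume "\<exists>ks\<in>{1..K}. \<exists>m\<in>{1..M}. V ks = {1..M} - {m} \<and> (\<forall>k\<in>{1..K}. k \<noteq> ks \<longrightarrow> V k = {1..M})"
        then obtain ks' m where km: "ks' \<in> {1..K}" "m \<in> {1..M}" "V ks' = {1..M} - {m}" by blast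
        have ne: "{1..M} - {m} \<noteq> {1..M}" using km(2) by blast
        have "ks' = ks" using Vo km(1,3) ne by metis
        hence "A = {1..M} - {m}" using km(3) Vks by simp
        thus False using A(4) km(2) by blast
      qed
    qed
    show "X \<in> I_idx M K Q - S_idx M K Q" unfolding XV using inI notS by simp
  qed
qed

lemma fmap_inj: "inj_on (fmap M K) ({1..Q} \<times> {1..K} \<times> Afam M)"
proof (rule inj_onI)
  fix X Y assume X: "X \<in> {1..Q} \<times> {1..K} \<times> Afam M" and Y: "Y \<in> {1..Q} \<times> {1..K} \<times> Afam M"
    and eq: "fmap M K X = fmap M K Y"
  obtain z ks A where Xe: "X = (z, ks, A)" by (cases X) auto
  obtain z' ks' A' where Ye: "Y = (z', ks', A')" by (cases Y) auto
  have ks: "ks \<in> {1..K}" "ks' \<in> {1..K}" using X Y Xe Ye by auto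
  have A: "A \<noteq> {1..M}" "A' \<noteq> {1..M}" using X Y Xe Ye unfolding Afam_def by auto
  have zz: "z = z'" and ff: "(\<lambda>k\<in>{1..K}. if k = ks then A else {1..M}) = (\<lambda>k\<in>{1..K}. if k = ks' then A' else {1..M})"
    using eq unfolding Xe Ye fmap_def by simp_all
  have f1: "(\<lambda>k\<in>{1..K}. if k = ks then A else {1..M}) ks = A" using ks(1) by simp
  have f2: "(\<lambda>k\<in>{1..K}. if k = ks' then A' else {1..M}) ks = (if ks = ks' then A' else {1..M})" using ks(1) by simp
  have kk: "ks = ks'"
  proof (rule ccontr)
    assume "ks \<noteq> ks'"
    have "A = (\<lambda>k\<in>{1..K}. if k = ks' then A' else {1..M}) ks" using f1 fun_cong[OF ff, of ks] by (rule trans[OF sym])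
    also have "\<dots> = {1..M}" by (simp only: f2 if_not_P[OF \<open>ks \<noteq> ks'\<close>])
    finally show False using A(1) by simp
  qed
  have "A = (\<lambda>k\<in>{1..K}. if k = ks' then A' else {1..M}) ks" using f1 fun_cong[OF ff, of ks] by (rule trans[OF sym])
  also have "\<dots> = A'" by (simp only: f2 if_P[OF kk])
  finally have "A = A'" .
  thus "X = Y" using Xe Ye zz kk by simp
qed

lemma card_main:
  assumes M2: "M \<ge> 2"
  shows "card (I_idx M K Q) = card (S_idx M K Q) + Q * K * (2 ^ M - M - 2)"
proof -
  have finI: "finite (I_idx M K Q)"
  proof (rule finite_subset)
    show "I_idx M K Q \<subseteq> {1..Q} \<times> PiE {1..K} (\<lambda>_. Pow {1..M})"
    proof
      fix X assume "X \<in> I_idx M K Q"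
      then obtain z V where XV: "X = (z, V)" "z \<in> {1..Q}" "V \<in> PiE {1..K} (\<lambda>_. {A. A \<subseteq> {1..M} \<and> A \<noteq> {}})"
        unfolding I_idx_def by blast
      have "PiE {1..K} (\<lambda>_. {A. A \<subseteq> {1..M} \<and> A \<noteq> {}}) \<subseteq> PiE {1..K} (\<lambda>_. Pow {1..M})"
        by (intro PiE_mono) blast
      thus "X \<in> {1..Q} \<times> PiE {1..K} (\<lambda>_. Pow {1..M})" using XV by blast
    qed
    show "finite ({1..Q} \<times> PiE {1..K} (\<lambda>_. Pow {1..M}))" by (intro finite_cartesian_product finite_PiE) auto
  qed
  have sub: "S_idx M K Q \<subseteq> I_idx M K Q" by (rule S_sub_I)
  have "card (I_idx M K Q - S_idx M K Q) = card (I_idx M K Q) - card (S_idx M K Q)"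
    using sub finI by (intro card_Diff_subset) (auto intro: finite_subset)
  moreover have "card (S_idx M K Q) \<le> card (I_idx M K Q)" using sub finI by (rule card_mono[rotated])
  moreover have "card (I_idx M K Q - S_idx M K Q) = Q * K * (2 ^ M - M - 2)"
  proof -
    have "card (I_idx M K Q - S_idx M K Q) = card ({1..Q} \<times> {1..K} \<times> Afam M)"
      unfolding IS_eq[OF M2] by (rule card_image[OF fmap_inj])
    also have "\<dots> = Q * (K * card (Afam M))" by (simp add: card_cartesian_product)
    finally show ?thesis using card_Afam[OF M2] by simp
  qed
  ultimately show ?thesis by linarith
qed


lemma nonred_main:
  assumes M2: "M \<ge> 2" and K2: "K \<ge> 2"
  shows "non_redundant M K (S_idx M K Q)"
proof -
  have main: "\<exists>P' Pz. is_joint_distr M K P' \<and> is_obs_distr M K Pz \<and>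
        (\<forall>(z', V')\<in>S_idx M K Q. z' = z \<and> V' \<noteq> V \<longrightarrow> ineq_holds M K P' Pz V') \<and>
        \<not> ineq_holds M K P' Pz V" if zV: "(z, V) \<in> S_idx M K Q" for z V
  proof -
    have VE: "V \<in> PiE {1..K} (\<lambda>_. {A. A \<subseteq> {1..M} \<and> A \<noteq> {}})"
      and hR: "\<exists>k\<in>{1..K}. V k \<noteq> {1..M}"
      and hS: "(\<exists>k\<in>{1..K}. \<exists>k'\<in>{1..K}. k \<noteq> k' \<and> V k \<noteq> {1..M} \<and> V k' \<noteq> {1..M}) \<or>
      (\<exists>ks\<in>{1..K}. \<exists>m\<in>{1..M}. V ks = {1..M} - {m} \<and>
          (\<forall>k\<in>{1..K}. k \<noteq> ks \<longrightarrow> V k = {1..M}))"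
      using zV unfolding S_idx_def I_idx_def by simp_all
    obtain P' Pz where W: "is_joint_distr M K P'" "is_obs_distr M K Pz"
      "\<forall>V'. V' \<in> PiE {1..K} (\<lambda>_. {A. A \<subseteq> {1..M} \<and> A \<noteq> {}}) \<and> (\<exists>k\<in>{1..K}. V' k \<noteq> {1..M})
        \<and> V' \<noteq> V \<longrightarrow> ineq_holds M K P' Pz V'" "\<not> ineq_holds M K P' Pz V"
      using witness[OF M2 K2 VE hR hS] by blast
    have "\<forall>(z', V')\<in>S_idx M K Q. z' = z \<and> V' \<noteq> V \<longrightarrow> ineq_holds M K P' Pz V'"
    proof (rule ballI)
      fix X assume X: "X \<in> S_idx M K Q"
      obtain z' V' where XV: "X = (z', V')" by (cases X)
      have "z' = z \<and> V' \<noteq> V \<longrightarrow> ineq_holds M K P' Pz V'"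
      proof
        assume c: "z' = z \<and> V' \<noteq> V"
        have "V' \<in> PiE {1..K} (\<lambda>_. {A. A \<subseteq> {1..M} \<and> A \<noteq> {}}) \<and> (\<exists>k\<in>{1..K}. V' k \<noteq> {1..M})"
          using X unfolding XV S_idx_def I_idx_def by simp
        moreover have "V' \<noteq> V" using c by simp
        ultimately show "ineq_holds M K P' Pz V'" using W(3) by blast
      qed
      thus "case X of (z', V') \<Rightarrow> z' = z \<and> V' \<noteq> V \<longrightarrow> ineq_holds M K P' Pz V'" unfolding XV by simp
    qed
    thus ?thesis using W(1,2,4) by blast
  qed
  show ?thesis unfolding non_redundant_def
  proof (intro ballI)
    fix X assume "X \<in> S_idx M K Q"
    moreover obtain z V where "X = (z, V)" by (cases X)
    ultimately show "case X of (z, V) \<Rightarrow> \<exists>P' Pz. is_joint_distr M K P' \<and> is_obs_distr M K Pz \<and>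
        (\<forall>(z', V')\<in>S_idx M K Q. z' = z \<and> V' \<noteq> V \<longrightarrow> ineq_holds M K P' Pz V') \<and>
        \<not> ineq_holds M K P' Pz V" using main by simp
  qed
qed

theorem theorem2:
  fixes M K Q :: nat
  assumes "M \<ge> 2" and "K \<ge> 2" and "Q \<ge> 1"
  shows "feasible M K Q (S_idx M K Q) = feasible M K Q (I_idx M K Q)
         \<and> non_redundant M K (S_idx M K Q)
         \<and> card (I_idx M K Q) = card (S_idx M K Q) + Q * K * (2 ^ M - M - 2)"
  using feasible_eq[OF assms(1)] nonred_main[OF assms(1,2)] card_main[OF assms(1)] by blast


end
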